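(* Let $\vec o_L\in\mathbb Z_2^{m_L}$ denote the logical measurement results (after syndrome measurement and correction) of a Clifford circuit with some input codeword. Consider any undetectable circuit-level Pauli error corresponding to $e\in\mathcal P_{n(T+1)}$ in the spacetime code, arising from the circuit error together with the subsequent correction from some decoder. Then $$\mathbb P^{(e)}_L(\vec o_L)=\mathbb P_L(\vec o_L+\vec f_L(e)),$$ where $\mathbb P_L$ is the ideal logical outcome distribution, and the logical error $\vec f_L(e)\in\mathbb Z_2^{m_L}$ equals $(\langle e,L'(\vec u^L)\rangle)_{\vec u^L\in\mathcal K^L}$.
   Context: Pauli operators are taken without phases; $\langle A,B\rangle=0$ if $A,B$ commute and $1$ otherwise. A non-adaptive Clifford circuit on $n$ qubits has time steps $t=1,\dots,T$: at step $t$, Pauli measurements (if any) are performed at time slice $t-0.5$ and then a Clifford unitary $U_t$ is applied. For $t\le t'$ let $U_{t,t'}=U_{t'-1}\cdots U_t$. The spacetime code has $n(T+1)$ qubits $(q,t-0.5)$; for $F\in\mathcal P_{n(T+1)}$, $F_{t-0.5}$ is its component at slice $t-0.5$, and $\kappa_{t-0.5}(O)$ places $O\in\mathcal P_n$ at that slice with identity elsewhere. $(\overrightarrow F)_{t-0.5}=\prod_{t'=1}^{t}U_{t',t}F_{t'-0.5}U_{t',t}^\dagger$ and $(\overleftarrow F)_{t-0.5}=\prod_{t'=t}^{T+1}U_{t,t'}^\dagger F_{t'-0.5}U_{t,t'}$. A circuit error inserting $e_t$ before step $t$ is the spacetime Pauli $e=\prod_t\kappa_{t-0.5}(e_t)$.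 The input is a codeword of a stabilizer code with generators $S^{(\mathrm{ini})}_1,\dots,S^{(\mathrm{ini})}_s$, and the circuit measures $M^{(\mathrm{circ})}_1,\dots,M^{(\mathrm{circ})}_m$. $\vec E=(S^{(\mathrm{ini})}_1,\dots,S^{(\mathrm{ini})}_s,M^{(\mathrm{circ})}_1,\dots,M^{(\mathrm{circ})}_m)$, $t_j$ is the time step of $E_j$ ($0$ for initial stabilizers), and $\vec o\in\mathbb Z_2^{s+m}$ is the outcome vector. $\mathcal O^\perp$ is the set of parity checks $\vec u$ satisfied deterministically by noiseless outcomes; an error is undetectable if it flips no parity check. $\mathcal K^L$ is a set of $m_L$ linearly independent vectors $\vec u^L\in\mathbb Z_2^{s+m}$ such that in the noiseless circuit the logical outcomes are $\vec o_L=(\vec u^L\cdot\vec o)_{\vec u^L\in\mathcal K^L}$. Measured spacetime logical generators: $L'(\vec u^L)=\overleftarrow{\prod_{j=s+1}^{s+m}\kappa_{t_j-0.5}(E_j^{u^L_j})}$. Known fact (effect of faults): with error $e$ the physical outcome distribution becomes $\mathbb P(\vec o+\vec f(e))$, where $f(e)_j=0$ for $j\le s$ and $f(e)_{s+i}=\langle(\overrightarrow e)_{t_{s+i}-0.5},M^{(\mathrm{circ})}_i\rangle$. *)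

theory Defs
  imports "HOL-Probability.Probability"
begin

text \<open>A Pauli operator without phase on the qubit set indexed by 'q is a pair (x,z) of
  bit-vectors: qubit q carries X^(x q) Z^(z q).\<close>
type_synonym 'q pauli = "('q \<Rightarrow> bool) \<times> ('q \<Rightarrow> bool)"

definition is_pauli :: "'q set \<Rightarrow> 'q pauli \<Rightarrow> bool" where
  "is_pauli Q A \<longleftrightarrow> (\<forall>q. q \<notin> Q \<longrightarrow> \<not> fst A q \<and> \<not> snd A q)"

definition pid :: "'q pauli" where
  "pid = (\<lambda>_. False, \<lambda>_. False)"

definition pmul :: "'q pauli \<Rightarrow> 'q pauli \<Rightarrow> 'q pauli" where
  "pmul A B = (\<lambda>q. fst A q \<noteq> fst B q, \<lambda>q. snd A q \<noteq> snd B q)"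

text \<open>Finite product of phase-free Paulis (order irrelevant without phases).\<close>
definition pprod :: "('i \<Rightarrow> 'q pauli) \<Rightarrow> 'i set \<Rightarrow> 'q pauli" where
  "pprod f I = (\<lambda>q. odd (card {i\<in>I. fst (f i) q}), \<lambda>q. odd (card {i\<in>I. snd (f i) q}))"

text \<open>Commutation bracket on qubit set Q: True (=1) iff A and B anticommute, i.e. they
  anticommute on an odd number of qubits.\<close>
definition symp :: "'q set \<Rightarrow> 'q pauli \<Rightarrow> 'q pauli \<Rightarrow> bool" where
  "symp Q A B \<longleftrightarrow> odd (card {q\<in>Q. (fst A q \<and> snd B q) \<noteq> (snd A q \<and> fst B q)})"

definition nq :: "nat \<Rightarrow> nat set" where "nq n = {..<n}"

text \<open>Clifford action: U t P = U_t P U_t^dagger, Ua t P = U_t^dagger P U_t.\<close>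
definition clifford_action :: "nat \<Rightarrow> (nat pauli \<Rightarrow> nat pauli) \<Rightarrow> (nat pauli \<Rightarrow> nat pauli) \<Rightarrow> bool" where
  "clifford_action n U Ua \<longleftrightarrow>
     (\<forall>P. is_pauli (nq n) P \<longrightarrow> is_pauli (nq n) (U P) \<and> is_pauli (nq n) (Ua P)
          \<and> Ua (U P) = P \<and> U (Ua P) = P) \<and>
     (\<forall>P Q. is_pauli (nq n) P \<longrightarrow> is_pauli (nq n) Q \<longrightarrow>
          U (pmul P Q) = pmul (U P) (U Q) \<and> symp (nq n) (U P) (U Q) = symp (nq n) P Q)"

text \<open>ucomp U t k = conjugation by U_{t,t+k} = U_{t+k-1} \<dots> U_t.\<close>
fun ucomp :: "(nat \<Rightarrow> nat pauli \<Rightarrow> nat pauli) \<Rightarrow> nat \<Rightarrow> nat \<Rightarrow> nat pauli \<Rightarrow> nat pauli" where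
  "ucomp U t 0 = id"
| "ucomp U t (Suc k) = U (t + k) \<circ> ucomp U t k"

text \<open>uadjcomp Ua t k P = U_{t,t+k}^dagger P U_{t,t+k}.\<close>
fun uadjcomp :: "(nat \<Rightarrow> nat pauli \<Rightarrow> nat pauli) \<Rightarrow> nat \<Rightarrow> nat \<Rightarrow> nat pauli \<Rightarrow> nat pauli" where
  "uadjcomp Ua t 0 = id"
| "uadjcomp Ua t (Suc k) = uadjcomp Ua t k \<circ> Ua (t + k)"

text \<open>Spacetime qubit (q,t) stands for (q, t-0.5), with q < n and 1 \<le> t \<le> T+1.\<close>
definition stq :: "nat \<Rightarrow> nat \<Rightarrow> (nat \<times> nat) set" where
  "stq n T = {..<n} \<times> {1..T+1}"

definition slc :: "(nat \<times> nat) pauli \<Rightarrow> nat \<Rightarrow> nat pauli" where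
  "slc F t = (\<lambda>q. fst F (q, t), \<lambda>q. snd F (q, t))"

definition kappa :: "nat \<Rightarrow> nat pauli \<Rightarrow> (nat \<times> nat) pauli" where
  "kappa t A = (\<lambda>(q, t'). t' = t \<and> fst A q, \<lambda>(q, t'). t' = t \<and> snd A q)"

definition mkst :: "nat \<Rightarrow> nat \<Rightarrow> (nat \<Rightarrow> nat pauli) \<Rightarrow> (nat \<times> nat) pauli" where
  "mkst n T G = (\<lambda>(q, t). q < n \<and> 1 \<le> t \<and> t \<le> T + 1 \<and> fst (G t) q,
                 \<lambda>(q, t). q < n \<and> 1 \<le> t \<and> t \<le> T + 1 \<and> snd (G t) q)"

text \<open>Forward propagation: (F->)_{t-0.5} = prod_{t'=1}^{t} U_{t',t} F_{t'-0.5} U_{t',t}^dagger.\<close>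
definition fwd :: "nat \<Rightarrow> nat \<Rightarrow> (nat \<Rightarrow> nat pauli \<Rightarrow> nat pauli) \<Rightarrow> (nat \<times> nat) pauli \<Rightarrow> (nat \<times> nat) pauli" where
  "fwd n T U F = mkst n T (\<lambda>t. pprod (\<lambda>t'. ucomp U t' (t - t') (slc F t')) {1..t})"

text \<open>Backward propagation: (<-F)_{t-0.5} = prod_{t'=t}^{T+1} U_{t,t'}^dagger F_{t'-0.5} U_{t,t'}.\<close>
definition bwd :: "nat \<Rightarrow> nat \<Rightarrow> (nat \<Rightarrow> nat pauli \<Rightarrow> nat pauli) \<Rightarrow> (nat \<times> nat) pauli \<Rightarrow> (nat \<times> nat) pauli" where
  "bwd n T Ua F = mkst n T (\<lambda>t. pprod (\<lambda>t'. uadjcomp Ua t (t' - t) (slc F t')) {t..T+1})"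

section \<open>Outcome vectors over Z2 (as bool vectors indexed from 1)\<close>

definition vxor :: "(nat \<Rightarrow> bool) \<Rightarrow> (nat \<Rightarrow> bool) \<Rightarrow> nat \<Rightarrow> bool" where
  "vxor a b = (\<lambda>j. a j \<noteq> b j)"

definition vdot :: "nat \<Rightarrow> (nat \<Rightarrow> bool) \<Rightarrow> (nat \<Rightarrow> bool) \<Rightarrow> bool" where
  "vdot N u w \<longleftrightarrow> odd (card {j\<in>{1..N}. u j \<and> w j})"

definition supp_in :: "nat \<Rightarrow> (nat \<Rightarrow> bool) \<Rightarrow> bool" where
  "supp_in N u \<longleftrightarrow> (\<forall>j. u j \<longrightarrow> j \<in> {1..N})"

definition fvec :: "nat \<Rightarrow> nat \<Rightarrow> nat \<Rightarrow> nat \<Rightarrow> (nat \<Rightarrow> nat pauli \<Rightarrow> nat pauli)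
     \<Rightarrow> (nat \<Rightarrow> nat pauli) \<Rightarrow> (nat \<Rightarrow> nat) \<Rightarrow> (nat \<times> nat) pauli \<Rightarrow> nat \<Rightarrow> bool" where
  "fvec n T s m U E tt e = (\<lambda>j. s < j \<and> j \<le> s + m \<and> symp (nq n) (slc (fwd n T U e) (tt j)) (E j))"

definition parity_checks :: "nat \<Rightarrow> (nat \<Rightarrow> bool) pmf \<Rightarrow> (nat \<Rightarrow> bool) set" where
  "parity_checks N P = {u. supp_in N u \<and> (\<exists>c. \<forall>w\<in>set_pmf P. vdot N u w = c)}"

definition Lprime :: "nat \<Rightarrow> nat \<Rightarrow> nat \<Rightarrow> nat \<Rightarrow> (nat \<Rightarrow> nat pauli \<Rightarrow> nat pauli)
     \<Rightarrow> (nat \<Rightarrow> nat pauli) \<Rightarrow> (nat \<Rightarrow> nat) \<Rightarrow> (nat \<Rightarrow> bool) \<Rightarrow> (nat \<times> nat) pauli" where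
  "Lprime n T s m Ua E tt u =
     bwd n T Ua (pprod (\<lambda>j. kappa (tt j) (if u j then E j else pid)) {s+1..s+m})"

definition lin_indep_Z2 :: "nat \<Rightarrow> (nat \<Rightarrow> nat \<Rightarrow> bool) \<Rightarrow> bool" where
  "lin_indep_Z2 mL uL \<longleftrightarrow>
     (\<forall>c :: nat \<Rightarrow> bool. (\<forall>j. even (card {k\<in>{..<mL}. c k \<and> uL k j})) \<longrightarrow> (\<forall>k<mL. \<not> c k))"

definition logical :: "nat \<Rightarrow> nat \<Rightarrow> (nat \<Rightarrow> nat \<Rightarrow> bool) \<Rightarrow> (nat \<Rightarrow> bool) \<Rightarrow> nat \<Rightarrow> bool" where
  "logical N mL uL w = (\<lambda>k. k < mL \<and> vdot N (uL k) w)"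

end

theory Submission imports Defs "HOL-Library.Z2" begin

abbreviation bb :: "bool \<Rightarrow> bit" where "bb \<equiv> of_bool"

lemma bnot: "(of_bool (\<not> b) :: bit) = 1 + of_bool b" by (cases b) simp_all
lemma bneq: "(of_bool (a \<noteq> b) :: bit) = of_bool a + of_bool b" by (cases a; cases b) simp_all
lemma bconj: "(of_bool (a \<and> b) :: bit) = of_bool a * of_bool b" by (cases a; cases b) simp_all

lemma oddSuc: "(of_bool (odd (Suc c)) :: bit) = 1 + of_bool (odd c)"
  by (cases "odd c") auto

lemma odd_card_sum:
  assumes "finite A"
  shows "(of_bool (odd (card {x\<in>A. p x})) :: bit) = (\<Sum>x\<in>A. of_bool (p x))"
  using assms
proof (induction A rule: finite_induct)
  case empty then show ?case by simp
next
  case (insert x F)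
  have fin: "finite {y\<in>F. p y}" using insert by simp
  show ?case
  proof (cases "p x")
    case True
    then have "{y\<in>insert x F. p y} = insert x {y\<in>F. p y}" by auto
    then have c: "card {y\<in>insert x F. p y} = Suc (card {y\<in>F. p y})" using insert fin by simp
    have "(\<Sum>y\<in>insert x F. bb (p y)) = bb (p x) + (\<Sum>y\<in>F. bb (p y))"
      using insert(1,2) by (rule sum.insert)
    then show ?thesis using insert.IH True by (simp only: c oddSuc) simp
  next
    case False
    then have "{y\<in>insert x F. p y} = {y\<in>F. p y}" by auto
    then show ?thesis using insert False by simp
  qed
qed


lemma symp_sum:
  assumes "finite Q"
  shows "bb (symp Q A B) = (\<Sum>q\<in>Q. bb (fst A q) * bb (snd B q) + bb (snd A q) * bb (fst B q))"
  unfolding symp_def by (subst odd_card_sum[OF assms]) (simp only: bneq bconj)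

lemma symp_comm: "symp Q A B = symp Q B A"
proof -
  have "{q\<in>Q. (fst A q \<and> snd B q) \<noteq> (snd A q \<and> fst B q)} = {q\<in>Q. (fst B q \<and> snd A q) \<noteq> (snd B q \<and> fst A q)}"
    by blast
  then show ?thesis unfolding symp_def by (simp only:)
qed

lemma ring_aux: "((a::'a::comm_semiring_1) + b) * c + (a' + b') * c' = (a * c + a' * c') + (b * c + b' * c')"
  by (simp add: algebra_simps)

lemma bb_inj: "bb a = bb b \<Longrightarrow> a = b" by (cases a; cases b) simp_all

lemma symp_pmul:
  assumes "finite Q"
  shows "bb (symp Q (pmul A B) C) = bb (symp Q A C) + bb (symp Q B C)"
  unfolding symp_sum[OF assms] pmul_def fst_conv snd_conv bneq
  by (simp only: sum.distrib[symmetric]) (rule sum.cong, rule refl, rule ring_aux)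

lemma symp_pid: "symp Q pid C = False"
  by (simp add: symp_def pid_def)
lemma symp_pid2: "symp Q C pid = False"
  by (simp add: symp_def pid_def)

lemma symp_pprod:
  assumes "finite Q" "finite I"
  shows "bb (symp Q (pprod f I) C) = (\<Sum>i\<in>I. bb (symp Q (f i) C))"
proof -
  have "bb (symp Q (pprod f I) C) = (\<Sum>q\<in>Q. (\<Sum>i\<in>I. bb (fst (f i) q)) * bb (snd C q) + (\<Sum>i\<in>I. bb (snd (f i) q)) * bb (fst C q))"
    unfolding symp_sum[OF assms(1)] pprod_def fst_conv snd_conv odd_card_sum[OF assms(2)] ..
  also have "\<dots> = (\<Sum>q\<in>Q. \<Sum>i\<in>I. bb (fst (f i) q) * bb (snd C q) + bb (snd (f i) q) * bb (fst C q))"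
    by (simp only: sum_distrib_right sum.distrib)
  also have "\<dots> = (\<Sum>i\<in>I. \<Sum>q\<in>Q. bb (fst (f i) q) * bb (snd C q) + bb (snd (f i) q) * bb (fst C q))"
    by (rule sum.swap)
  also have "\<dots> = (\<Sum>i\<in>I. bb (symp Q (f i) C))"
    unfolding symp_sum[OF assms(1)] ..
  finally show ?thesis .
qed

lemma symp_pprod2:
  assumes "finite Q" "finite I"
  shows "bb (symp Q C (pprod f I)) = (\<Sum>i\<in>I. bb (symp Q C (f i)))"
  using symp_pprod[OF assms] by (simp add: symp_comm)

lemma symp_stq:
  "bb (symp (stq n T) A B) = (\<Sum>t\<in>{1..T+1}. bb (symp (nq n) (slc A t) (slc B t)))"
proof -
  have fin: "finite (stq n T)" by (simp add: stq_def)
  have finq: "finite (nq n)" by (simp add: nq_def)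
  have "bb (symp (stq n T) A B) = (\<Sum>p\<in>{..<n} \<times> {1..T+1}. bb (fst A p) * bb (snd B p) + bb (snd A p) * bb (fst B p))"
    using symp_sum[OF fin, of A B] by (simp only: stq_def)
  also have "\<dots> = (\<Sum>q\<in>{..<n}. \<Sum>t\<in>{1..T+1}. bb (fst A (q,t)) * bb (snd B (q,t)) + bb (snd A (q,t)) * bb (fst B (q,t)))"
    unfolding sum.cartesian_product by (rule sum.cong, rule refl) (simp only: case_prod_beta prod.collapse)
  also have "\<dots> = (\<Sum>t\<in>{1..T+1}. \<Sum>q\<in>{..<n}. bb (fst A (q,t)) * bb (snd B (q,t)) + bb (snd A (q,t)) * bb (fst B (q,t)))"
    by (rule sum.swap)
  also have "\<dots> = (\<Sum>t\<in>{1..T+1}. bb (symp (nq n) (slc A t) (slc B t)))"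
    unfolding symp_sum[OF finq] by (simp only: nq_def slc_def fst_conv snd_conv)
  finally show ?thesis .
qed

lemma symp_mkst:
  assumes "t \<in> {1..T+1}"
  shows "symp (nq n) (slc (mkst n T G) t) X = symp (nq n) (G t) X"
proof -
  have "{q\<in>nq n. (fst (slc (mkst n T G) t) q \<and> snd X q) \<noteq> (snd (slc (mkst n T G) t) q \<and> fst X q)}
      = {q\<in>nq n. (fst (G t) q \<and> snd X q) \<noteq> (snd (G t) q \<and> fst X q)}"
    using assms by (auto simp: nq_def slc_def mkst_def)
  then show ?thesis by (simp add: symp_def)
qed

lemma slc_kappa: "slc (kappa t X) t' = (if t' = t then X else pid)"
  by (auto simp: slc_def kappa_def pid_def)

lemma symp_kappa:
  assumes "t \<in> {1..T+1}"
  shows "symp (stq n T) A (kappa t X) = symp (nq n) (slc A t) X"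
proof -
  have "bb (symp (stq n T) A (kappa t X)) = (\<Sum>t'\<in>{1..T+1}. if t' = t then bb (symp (nq n) (slc A t) X) else 0)"
    unfolding symp_stq by (rule sum.cong) (auto simp: slc_kappa symp_pid2)
  also have "\<dots> = bb (symp (nq n) (slc A t) X)" using assms by simp
  finally show ?thesis by (rule bb_inj)
qed

lemma is_pauli_pprod: "(\<And>i. i \<in> I \<Longrightarrow> is_pauli Q (f i)) \<Longrightarrow> is_pauli Q (pprod f I)"
  unfolding is_pauli_def pprod_def
proof (intro allI impI)
  fix q assume a: "\<And>i. i \<in> I \<Longrightarrow> \<forall>q. q \<notin> Q \<longrightarrow> \<not> fst (f i) q \<and> \<not> snd (f i) q" and q: "q \<notin> Q"
  then have h1: "{i\<in>I. fst (f i) q} = {}" and h2: "{i\<in>I. snd (f i) q} = {}" by auto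
  show "\<not> fst (\<lambda>q. odd (card {i \<in> I. fst (f i) q}), \<lambda>q. odd (card {i \<in> I. snd (f i) q})) q \<and>
         \<not> snd (\<lambda>q. odd (card {i \<in> I. fst (f i) q}), \<lambda>q. odd (card {i \<in> I. snd (f i) q})) q"
    unfolding fst_conv snd_conv h1 h2 by simp
qed

lemma slc_pprod: "slc (pprod f I) t = pprod (\<lambda>i. slc (f i) t) I"
  by (simp add: slc_def pprod_def)

lemma cliff_comp:
  assumes "\<forall>i<k. clifford_action n (U (t+i)) (Ua (t+i))"
    and "is_pauli (nq n) P" "is_pauli (nq n) Q"
  shows "is_pauli (nq n) (ucomp U t k P) \<and> is_pauli (nq n) (uadjcomp Ua t k Q) \<and>
         symp (nq n) (ucomp U t k P) Q = symp (nq n) P (uadjcomp Ua t k Q)"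
  using assms
proof (induction k arbitrary: Q)
  case 0 then show ?case by simp
next
  case (Suc k)
  have c: "clifford_action n (U (t+k)) (Ua (t+k))" using Suc.prems by simp
  have a: "is_pauli (nq n) (Ua (t+k) Q)" using c Suc.prems unfolding clifford_action_def by blast
  have IH: "is_pauli (nq n) (ucomp U t k P) \<and> is_pauli (nq n) (uadjcomp Ua t k (Ua (t+k) Q)) \<and>
         symp (nq n) (ucomp U t k P) (Ua (t+k) Q) = symp (nq n) P (uadjcomp Ua t k (Ua (t+k) Q))"
    using Suc.IH[of "Ua (t+k) Q"] Suc.prems a by simp
  have inv: "U (t+k) (Ua (t+k) Q) = Q" using c Suc.prems(3) unfolding clifford_action_def by blast
  have "symp (nq n) (U (t+k) (ucomp U t k P)) Q = symp (nq n) (U (t+k) (ucomp U t k P)) (U (t+k) (Ua (t+k) Q))"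
    using inv by simp
  also have "\<dots> = symp (nq n) (ucomp U t k P) (Ua (t+k) Q)"
    using c IH a unfolding clifford_action_def by blast
  finally have s1: "symp (nq n) (U (t+k) (ucomp U t k P)) Q = symp (nq n) P (uadjcomp Ua t k (Ua (t+k) Q))"
    using IH by simp
  have p1: "is_pauli (nq n) (U (t+k) (ucomp U t k P))" using c IH unfolding clifford_action_def by blast
  show ?case using IH s1 p1 by simp
qed


lemma fwd_bwd:
  assumes cliff: "\<forall>t\<in>{1..T}. clifford_action n (U t) (Ua t)"
    and eP: "\<forall>t. is_pauli (nq n) (slc e t)" and FP: "\<forall>t. is_pauli (nq n) (slc F t)"
  shows "symp (stq n T) e (bwd n T Ua F) = symp (stq n T) (fwd n T U e) F"
proof -
  have finq: "finite (nq n)" by (simp add: nq_def)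
  define g where "g t t' = bb (symp (nq n) (ucomp U t (t'-t) (slc e t)) (slc F t'))" for t t'
  have "bb (symp (stq n T) e (bwd n T Ua F)) = (\<Sum>t\<in>{1..T+1}. bb (symp (nq n) (slc e t) (slc (bwd n T Ua F) t)))"
    by (rule symp_stq)
  also have "\<dots> = (\<Sum>t\<in>{1..T+1}. bb (symp (nq n) (slc e t) (pprod (\<lambda>t'. uadjcomp Ua t (t' - t) (slc F t')) {t..T+1})))"
    by (rule sum.cong, rule refl) (simp add: bwd_def symp_comm[of "nq n" "slc e _"] symp_mkst)
  also have "\<dots> = (\<Sum>t\<in>{1..T+1}. \<Sum>t'\<in>{t..T+1}. bb (symp (nq n) (slc e t) (uadjcomp Ua t (t' - t) (slc F t'))))"
    by (rule sum.cong, rule refl, rule symp_pprod2[OF finq]) simp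
  also have "\<dots> = (\<Sum>t\<in>{1..T+1}. \<Sum>t'\<in>{t..T+1}. g t t')"
  proof (rule sum.cong, rule refl, rule sum.cong, rule refl)
    fix t t' assume t: "t \<in> {1..T+1}" and t': "t' \<in> {t..T+1}"
    have "\<forall>i<t'-t. clifford_action n (U (t+i)) (Ua (t+i))"
      using cliff t t' by auto
    then show "bb (symp (nq n) (slc e t) (uadjcomp Ua t (t' - t) (slc F t'))) = g t t'"
      unfolding g_def using cliff_comp[of "t'-t" n U t Ua "slc e t" "slc F t'"] eP FP by simp
  qed
  also have "\<dots> = (\<Sum>t\<in>{1..T+1}. \<Sum>t'\<in>{t'. t' \<in> {1..T+1} \<and> t \<le> t'}. g t t')"
    by (rule sum.cong, rule refl, rule sum.cong) auto
  also have "\<dots> = (\<Sum>t'\<in>{1..T+1}. \<Sum>t\<in>{t. t \<in> {1..T+1} \<and> t \<le> t'}. g t t')"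
    by (rule sum.swap_restrict) auto
  also have "\<dots> = (\<Sum>t'\<in>{1..T+1}. \<Sum>t\<in>{1..t'}. g t t')"
    by (rule sum.cong, rule refl, rule sum.cong) auto
  also have "\<dots> = (\<Sum>t'\<in>{1..T+1}. bb (symp (nq n) (pprod (\<lambda>t. ucomp U t (t' - t) (slc e t)) {1..t'}) (slc F t')))"
    unfolding g_def by (rule sum.cong, rule refl, rule symp_pprod[OF finq, symmetric]) simp
  also have "\<dots> = (\<Sum>t'\<in>{1..T+1}. bb (symp (nq n) (slc (fwd n T U e) t') (slc F t')))"
    by (rule sum.cong, rule refl) (simp add: fwd_def symp_mkst)
  also have "\<dots> = bb (symp (stq n T) (fwd n T U e) F)"
    by (rule symp_stq[symmetric])
  finally show ?thesis by (rule bb_inj)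
qed

theorem lemma15:
  fixes n T s m mL :: nat
    and U Ua :: "nat \<Rightarrow> nat pauli \<Rightarrow> nat pauli"
    and E :: "nat \<Rightarrow> nat pauli"
    and tt :: "nat \<Rightarrow> nat"
    and uL :: "nat \<Rightarrow> nat \<Rightarrow> bool"
    and P Pe :: "(nat \<Rightarrow> bool) pmf"
    and e :: "(nat \<times> nat) pauli"
    and oL :: "nat \<Rightarrow> bool"
  assumes cliff: "\<forall>t\<in>{1..T}. clifford_action n (U t) (Ua t)"
    and E_pauli: "\<forall>j\<in>{1..s+m}. is_pauli (nq n) (E j)"
    and tt_ini: "\<forall>j\<in>{1..s}. tt j = 0"
    and tt_circ: "\<forall>j\<in>{s+1..s+m}. tt j \<in> {1..T}"
    and P_supp: "\<forall>w\<in>set_pmf P. supp_in (s + m) w"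
    and KL_supp: "\<forall>k<mL. supp_in (s + m) (uL k)"
    and KL_indep: "lin_indep_Z2 mL uL"
    and e_pauli: "is_pauli (stq n T) e"
    and undetectable: "\<forall>u\<in>parity_checks (s + m) P. \<not> vdot (s + m) u (fvec n T s m U E tt e)"
    and fault_effect: "\<forall>w. pmf Pe w = pmf P (vxor w (fvec n T s m U E tt e))"
  shows "pmf (map_pmf (logical (s + m) mL uL) Pe) oL
       = pmf (map_pmf (logical (s + m) mL uL) P)
           (vxor oL (\<lambda>k. k < mL \<and> symp (stq n T) e (Lprime n T s m Ua E tt (uL k))))"
proof -
  define f where "f = fvec n T s m U E tt e"
  define c where "c = (\<lambda>k. k < mL \<and> symp (stq n T) e (Lprime n T s m Ua E tt (uL k)))"
  define g where "g = logical (s + m) mL uL"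
  have finq: "finite (nq n)" by (simp add: nq_def)
  have fins: "finite (stq n T)" by (simp add: stq_def)
  have eP: "\<forall>t. is_pauli (nq n) (slc e t)"
    using e_pauli by (auto simp: is_pauli_def stq_def slc_def nq_def)
  have key: "vdot (s+m) u f = symp (stq n T) e (Lprime n T s m Ua E tt u)" for u
  proof -
    define F where "F = pprod (\<lambda>j. kappa (tt j) (if u j then E j else pid)) {s+1..s+m}"
    have FP: "\<forall>t. is_pauli (nq n) (slc F t)"
    proof
      fix t
      show "is_pauli (nq n) (slc F t)"
        unfolding F_def slc_pprod
        by (rule is_pauli_pprod) (use E_pauli in \<open>auto simp: slc_kappa is_pauli_def pid_def\<close>)
    qed
    have "bb (symp (stq n T) e (Lprime n T s m Ua E tt u)) = bb (symp (stq n T) (fwd n T U e) F)"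
      unfolding Lprime_def F_def[symmetric] using fwd_bwd[OF cliff eP FP] by simp
    also have "\<dots> = (\<Sum>j\<in>{s+1..s+m}. bb (symp (stq n T) (fwd n T U e) (kappa (tt j) (if u j then E j else pid))))"
      unfolding F_def by (rule symp_pprod2[OF fins]) simp
    also have "\<dots> = (\<Sum>j\<in>{s+1..s+m}. bb (u j) * bb (symp (nq n) (slc (fwd n T U e) (tt j)) (E j)))"
    proof (rule sum.cong, rule refl)
      fix j assume j: "j \<in> {s+1..s+m}"
      then have "tt j \<in> {1..T}" using tt_circ by blast
      then have "tt j \<in> {1..T+1}" by auto
      then show "bb (symp (stq n T) (fwd n T U e) (kappa (tt j) (if u j then E j else pid))) =
            bb (u j) * bb (symp (nq n) (slc (fwd n T U e) (tt j)) (E j))"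
        by (cases "u j") (simp_all add: symp_kappa symp_pid2)
    qed
    also have "\<dots> = (\<Sum>j\<in>{1..s+m}. bb (u j \<and> f j))"
    proof (rule sym, rule sum.mono_neutral_cong_right)
      show "\<forall>i\<in>{1..s + m} - {s + 1..s + m}. bb (u i \<and> f i) = 0"
        by (auto simp: f_def fvec_def)
      show "\<And>x. x \<in> {s + 1..s + m} \<Longrightarrow> bb (u x \<and> f x) = bb (u x) * bb (symp (nq n) (slc (fwd n T U e) (tt x)) (E x))"
        by (simp only: bconj) (simp add: f_def fvec_def)
    qed auto
    also have "\<dots> = bb (vdot (s+m) u f)"
      unfolding vdot_def by (rule odd_card_sum[symmetric]) simp
    finally show ?thesis by (intro bb_inj) simp
  qed
  have vlin: "vdot N u (vxor w f) = (vdot N u w \<noteq> vdot N u f)" for N u w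
  proof -
    have "bb (vdot N u (vxor w f)) = (\<Sum>j\<in>{1..N}. bb (u j) * (bb (w j) + bb (f j)))"
      unfolding vdot_def vxor_def odd_card_sum[OF finite_atLeastAtMost] bconj bneq ..
    also have "\<dots> = bb (vdot N u w) + bb (vdot N u f)"
      unfolding vdot_def odd_card_sum[OF finite_atLeastAtMost] bconj
      by (simp only: distrib_left sum.distrib)
    finally show ?thesis unfolding bneq[symmetric] by (rule bb_inj)
  qed
  have glin: "g (vxor w f) = vxor (g w) c" for w
    unfolding g_def logical_def vxor_def c_def using key vlin[unfolded vxor_def] by auto
  have invo: "vxor (vxor w x) x = w" for w x :: "nat \<Rightarrow> bool"
    by (auto simp: vxor_def)
  have injx: "inj (\<lambda>w. vxor w x)" for x :: "nat \<Rightarrow> bool"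
    by (metis injI invo)
  have Pe_eq: "Pe = map_pmf (\<lambda>w. vxor w f) P"
  proof (rule pmf_eqI)
    fix i
    have "pmf (map_pmf (\<lambda>w. vxor w f) P) (vxor (vxor i f) f) = pmf P (vxor i f)"
      by (rule pmf_map_inj'[OF injx])
    then show "pmf Pe i = pmf (map_pmf (\<lambda>w. vxor w f) P) i"
      using fault_effect f_def invo by simp
  qed
  have "map_pmf g Pe = map_pmf (\<lambda>x. vxor x c) (map_pmf g P)"
    unfolding Pe_eq map_pmf_comp glin ..
  then have "pmf (map_pmf g Pe) oL = pmf (map_pmf (\<lambda>x. vxor x c) (map_pmf g P)) (vxor (vxor oL c) c)"
    using invo by simp
  also have "\<dots> = pmf (map_pmf g P) (vxor oL c)"
    by (rule pmf_map_inj'[OF injx])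
  finally show ?thesis unfolding g_def c_def .
qed

end
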